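(* Let $R$ be a ring with $2\notin U(R)$, and let $G$ be a non-trivial abelian group such that the group ring $RG$ is a GWNC ring. Then $G$ is a $2$-group and $2\in{\rm Nil}(R)$.
   Context: All rings are associative with identity. For a ring $S$, $U(S)$, ${\rm Nil}(S)$, ${\rm Id}(S)$ denote units, nilpotents, idempotents. $S$ is GWNC if every $a\in S\setminus U(S)$ can be written as $a=q+e$ or $a=q-e$ with $q\in{\rm Nil}(S)$, $e\in{\rm Id}(S)$. A group is a $p$-group if the order of each of its elements is a power of the prime $p$. *)

theory Defs
  imports Main "HOL-Library.Poly_Mapping"
begin

definition ring_unit :: "'a::ring_1 \<Rightarrow> bool" where
  "ring_unit a \<longleftrightarrow> (\<exists>b. a * b = 1 \<and> b * a = 1)"

definition ring_nilpotent :: "'a::ring_1 \<Rightarrow> bool" where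
  "ring_nilpotent a \<longleftrightarrow> (\<exists>n::nat. a ^ n = 0)"

definition ring_idempotent :: "'a::ring_1 \<Rightarrow> bool" where
  "ring_idempotent e \<longleftrightarrow> e * e = e"

definition GWNC :: "'a::ring_1 itself \<Rightarrow> bool" where
  "GWNC _ \<longleftrightarrow> (\<forall>a::'a. \<not> ring_unit a \<longrightarrow>
      (\<exists>q e. ring_nilpotent q \<and> ring_idempotent e \<and> (a = q + e \<or> a = q - e)))"

text \<open>Abelian groups are written additively (type class ab_group_add).
  The order of an element g is the least n > 0 with n g = 0, and 0 if no such n exists.\<close>

definition add_order :: "'g::ab_group_add \<Rightarrow> nat" where
  "add_order g = (if \<exists>n>0. ((+) g ^^ n) 0 = 0
                  then (LEAST n. n > 0 \<and> ((+) g ^^ n) 0 = 0) else 0)"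

definition is_p_group :: "nat \<Rightarrow> 'g::ab_group_add itself \<Rightarrow> bool" where
  "is_p_group p _ \<longleftrightarrow> (\<forall>g::'g. \<exists>k::nat. add_order g = p ^ k)"

text \<open>The group ring RG is the ring of finitely supported functions G \<Rightarrow> R with
  convolution product: the poly_mapping type from HOL-Library.Poly_Mapping.\<close>

end

theory Submission
  imports Defs "HOL-Computational_Algebra.Primes"
begin



lemma comm_power_mult:
  fixes a b :: "'a::ring_1"
  assumes "a * b = b * a"
  shows "(a * b) ^ n = a ^ n * b ^ n"
proof (induct n)
  case 0 then show ?case by simp
next
  case (Suc n)
  have c: "b ^ n * a = a * b ^ n"
    using power_commuting_commutes[of b a n] assms by simp
  have "(a * b) ^ Suc n = a * b * (a ^ n * b ^ n)" using Suc by simp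
  also have "\<dots> = a * (b * a ^ n) * b ^ n" by (simp add: mult.assoc)
  also have "b * a ^ n = a ^ n * b"
    using power_commuting_commutes[of a b n] assms by simp
  also have "a * (a ^ n * b) * b ^ n = a ^ Suc n * b ^ Suc n"
    by (simp add: mult.assoc power_commutes)
  finally show ?case .
qed

lemma nilp_mult_comm:
  fixes a b :: "'a::ring_1"
  assumes "a * b = b * a" "a ^ n = 0"
  shows "(a * b) ^ n = 0" "(b * a) ^ n = 0"
  using comm_power_mult[OF assms(1), of n] assms by (auto simp: )

lemma binomial_commute:
  fixes a b :: "'a::ring_1"
  assumes ab: "a * b = b * a"
  shows "(a + b) ^ n = (\<Sum>k\<le>n. of_nat (n choose k) * a ^ k * b ^ (n - k))"
proof (induct n)
  case 0
  then show ?case by simp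
next
  case (Suc n)
  have bak: "b * a ^ k = a ^ k * b" for k
    using power_commuting_commutes[of a b k] ab by simp
  have decomp: "{0..n+1} = {0} \<union> {n + 1} \<union> {1..n}" and decomp2: "{0..n} = {0} \<union> {1..n}"
    by auto
  have "(a + b)^(n+1) = (a + b) * (\<Sum>k\<le>n. of_nat (n choose k) * a^k * b^(n - k))"
    using Suc.hyps by simp
  also have "\<dots> = a * (\<Sum>k\<le>n. of_nat (n choose k) * a^k * b^(n-k)) +
      b * (\<Sum>k\<le>n. of_nat (n choose k) * a^k * b^(n-k))"
    by (rule distrib_right)
  also have "\<dots> = (\<Sum>k\<le>n. of_nat (n choose k) * a^(k+1) * b^(n-k)) +
      (\<Sum>k\<le>n. of_nat (n choose k) * a^k * b^(n - k + 1))"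
  proof -
    have hh: "x * (of_nat m * y) = of_nat m * (x * y)" for x y :: 'a and m
      by (metis mult.assoc mult_of_nat_commute)
    have bak': "b * (a ^ k * y) = a ^ k * (b * y)" for k y
      by (metis bak mult.assoc)
    have "a * (of_nat (n choose k) * a^k * b^(n-k)) = of_nat (n choose k) * a^(k+1) * b^(n-k)" for k
      by (simp add: mult.assoc hh)
    moreover have "b * (of_nat (n choose k) * a^k * b^(n-k)) = of_nat (n choose k) * a^k * b^(n-k+1)" for k
      by (simp add: mult.assoc hh bak')
    ultimately show ?thesis by (simp add: sum_distrib_left)
  qed
  also have "\<dots> = (\<Sum>k\<le>n. of_nat (n choose k) * a^k * b^(n + 1 - k)) +
      (\<Sum>k=1..n+1. of_nat (n choose (k - 1)) * a^k * b^(n + 1 - k))"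
    by (simp add: atMost_atLeast0 sum.shift_bounds_cl_Suc_ivl Suc_diff_le field_simps del: sum.cl_ivl_Suc)
  also have "\<dots> = b^(n + 1) +
      (\<Sum>k=1..n. of_nat (n choose k) * a^k * b^(n + 1 - k)) + (a^(n + 1) +
      (\<Sum>k=1..n. of_nat (n choose (k - 1)) * a^k * b^(n + 1 - k)))"
      using sum.nat_ivl_Suc' [of 1 n "\<lambda>k. of_nat (n choose (k-1)) * a ^ k * b ^ (n + 1 - k)"]
    by (simp add: sum.atLeast_Suc_atMost atMost_atLeast0)
  also have "\<dots> = a^(n + 1) + b^(n + 1) +
      (\<Sum>k=1..n. of_nat (n + 1 choose k) * a^k * b^(n + 1 - k))"
    by (auto simp add: field_simps sum.distrib [symmetric] choose_reduce_nat)
  also have "\<dots> = (\<Sum>k\<le>n+1. of_nat (n + 1 choose k) * a^k * b^(n + 1 - k))"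
    using decomp by (simp add: atMost_atLeast0 field_simps)
  finally show ?case
    by simp
qed

lemma nilp_add:
  fixes a b :: "'a::ring_1"
  assumes ab: "a * b = b * a" and "a ^ m = 0" and "b ^ n = 0"
  shows "(a + b) ^ (m + n) = 0"
proof -
  have "of_nat ((m + n) choose k) * a ^ k * b ^ (m + n - k) = 0" if "k \<le> m + n" for k
  proof (cases "m \<le> k")
    case True
    then have "a ^ k = a ^ m * a ^ (k - m)" by (simp flip: power_add)
    then show ?thesis using assms by simp
  next
    case False
    then have "m + n - k = n + (m - k)" by simp
    then have "b ^ (m + n - k) = b ^ n * b ^ (m - k)" by (simp add: power_add)
    then show ?thesis using assms by simp
  qed
  then show ?thesis by (simp add: binomial_commute[OF ab])
qed

lemma gwnc_key:
  fixes a q e :: "'a::ring_1"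
  assumes cen: "a * q = q * a" and qn: "q ^ n = 0" and ee: "e * e = e"
    and dec: "a = q + e \<or> a = q - e"
  shows "(a * (a - 1)) ^ n = 0 \<or> (a * (a + 1)) ^ n = 0"
  using dec
proof
  assume h: "a = q + e"
  then have e: "e = a - q" by simp
  have "(a - q) * (a - q) = a - q" using ee e by simp
  then have "a * a - q * a - q * a + q * q = a - q"
    by (simp add: algebra_simps cen)
  then have "a * (a - 1) = q * (2 * a - q - 1)"
    by (simp add: algebra_simps mult_2_right mult_2)
  moreover have "q * (2 * a - q - 1) = (2 * a - q - 1) * q"
    by (simp add: algebra_simps cen mult_2_right mult_2)
  ultimately show ?thesis using nilp_mult_comm(1)[of q "2 * a - q - 1" n] qn by simp
next
  assume h: "a = q - e"
  then have e: "e = q - a" by simp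
  have "(q - a) * (q - a) = q - a" using ee e by simp
  then have "q * q - q * a - q * a + a * a = q - a"
    by (simp add: algebra_simps cen)
  then have "a * (a + 1) = q * (2 * a - q + 1)"
    by (simp add: algebra_simps mult_2_right mult_2)
  moreover have "q * (2 * a - q + 1) = (2 * a - q + 1) * q"
    by (simp add: algebra_simps cen mult_2_right mult_2)
  ultimately show ?thesis using nilp_mult_comm(1)[of q "2 * a - q + 1" n] qn by simp
qed

lemma primepow_dvd_choose_aux:
  fixes p :: nat
  assumes "prime p"
  shows "0 < i \<Longrightarrow> i < p ^ m \<Longrightarrow> k + m \<le> j \<Longrightarrow> p ^ j dvd i * c \<Longrightarrow> p ^ k dvd c"
proof (induct m arbitrary: i j)
  case 0
  then show ?case by simp
next
  case (Suc m)
  show ?case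
  proof (cases "p dvd i")
    case True
    then obtain i' where i': "i = p * i'" by blast
    have p0: "p > 0" using assms prime_gt_0_nat by blast
    have "0 < i'" using Suc.prems(1) i' by simp
    moreover have "i' < p ^ m" using Suc.prems(2) i' p0 by simp
    moreover have "k + m \<le> j - 1" using Suc.prems(3) by simp
    moreover have "p ^ (j - 1) dvd i' * c"
    proof -
      have j: "j = Suc (j - 1)" using Suc.prems(3) by simp
      have "p * p ^ (j - 1) dvd p * (i' * c)"
        using Suc.prems(4) i' j by (metis mult.assoc power_Suc)
      then show ?thesis using p0 by simp
    qed
    ultimately show ?thesis using Suc.hyps by blast
  next
    case False
    then have "coprime (p ^ j) i"
      using assms by (metis prime_imp_coprime coprime_power_left_iff)
    then have "p ^ j dvd c" using Suc.prems(4) coprime_dvd_mult_right_iff by blast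
    moreover have "p ^ k dvd p ^ j" using Suc.prems(3) by (simp add: le_imp_power_dvd)
    ultimately show ?thesis by (rule dvd_trans[rotated])
  qed
qed

lemma primepow_dvd_choose:
  fixes p :: nat
  assumes "prime p" "0 < i" "i < p ^ m" "k + m \<le> j"
  shows "p ^ k dvd (p ^ j choose i)"
proof -
  have "i * (p ^ j choose i) = p ^ j * ((p ^ j - 1) choose (i - 1))"
    using times_binomial_minus1_eq[OF assms(2)] .
  then have "p ^ j dvd i * (p ^ j choose i)" by simp
  then show ?thesis using primepow_dvd_choose_aux[OF assms] by blast
qed

lemma idem_power: fixes E :: "'a::ring_1" assumes "E * E = E" shows "0 < m \<Longrightarrow> E ^ m = E"
proof (induct m)
  case 0 then show ?case by simp
next
  case (Suc m) then show ?case using assms by (cases m) auto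
qed

lemma unipotent_pow:
  fixes E N :: "'a::ring_1"
  assumes p: "prime p" and EE: "E * E = E" and EN: "E * N = N" and NE: "N * E = N"
    and Nn: "N ^ n = 0" and pE: "of_nat (p ^ k) * E = 0"
  shows "\<exists>j>0. (E + N) ^ (p ^ j) = E"
proof -
  define j where "j = k + n + 1"
  define M where "M = p ^ j"
  have p1: "p > 1" using p prime_gt_1_nat by blast
  have M0: "M > 0" using p1 M_def by simp
  have nlt: "n < p ^ n"
  proof -
    have "n < 2 ^ n" by (rule less_exp)
    also have "(2::nat) ^ n \<le> p ^ n" using p1 by (simp add: power_mono)
    finally show ?thesis .
  qed
  have NEc: "N * E = E * N" using EN NE by simp
  have ENi: "E * N ^ i = N ^ i" if i0: "0 < i" for i
  proof -
    obtain i' where "i = Suc i'" using i0 by (cases i) auto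
    then show ?thesis using EN by (simp add: mult.assoc[symmetric])
  qed
  have trm: "of_nat (M choose i) * N ^ i * E ^ (M - i) = (if i = 0 then E else 0)"
    if "i \<le> M" for i
  proof (cases "i = 0")
    case True
    then show ?thesis using idem_power[OF EE M0] by simp
  next
    case False
    show ?thesis
    proof (cases "n \<le> i")
      case True
      then have "N ^ i = N ^ n * N ^ (i - n)" by (simp flip: power_add)
      then show ?thesis using Nn False by simp
    next
      case nle: False
      have "p ^ k dvd (M choose i)"
        unfolding M_def
      proof (rule primepow_dvd_choose[OF p, of i n])
        show "0 < i" using False by simp
        show "i < p ^ n" using nle nlt by simp
        show "k + n \<le> j" using j_def by simp
      qed
      then obtain c where c: "M choose i = p ^ k * c" by blast
      have "of_nat (p ^ k) * N ^ i = (0::'a)"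
      proof -
        have "of_nat (p ^ k) * N ^ i = of_nat (p ^ k) * (E * N ^ i)" using ENi[of i] False by simp
        also have "\<dots> = (of_nat (p ^ k) * E) * N ^ i" by (simp only: mult.assoc)
        finally show ?thesis using pE by simp
      qed
      moreover have "of_nat (M choose i) * N ^ i = of_nat c * (of_nat (p ^ k) * N ^ i)"
      proof -
        have "M choose i = c * p ^ k" using c by simp
        then have "(of_nat (M choose i) :: 'a) = of_nat c * of_nat (p ^ k)" by simp
        then show ?thesis by (simp add: mult.assoc)
      qed
      ultimately have "of_nat (M choose i) * N ^ i = (0::'a)" by simp
      then show ?thesis using False by simp
    qed
  qed
  have "(E + N) ^ M = (N + E) ^ M" by (simp add: add.commute)
  also have "\<dots> = (\<Sum>i\<le>M. of_nat (M choose i) * N ^ i * E ^ (M - i))"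
    by (rule binomial_commute[OF NEc])
  also have "\<dots> = (\<Sum>i\<le>M. (if i = 0 then E else 0))"
    by (rule sum.cong) (auto simp: trm)
  also have "\<dots> = E" by simp
  finally show ?thesis unfolding M_def using j_def by auto
qed



lemma lookup_single_mult:
  fixes x :: "'g::ab_group_add \<Rightarrow>\<^sub>0 'r::ring_1"
  shows "Poly_Mapping.lookup (Poly_Mapping.single h a * x) k = a * Poly_Mapping.lookup x (k - h)"
proof -
  have "Poly_Mapping.lookup (Poly_Mapping.single h a * x) k
      = (\<Sum>l. (a when h = l) * (\<Sum>q. Poly_Mapping.lookup x q when k = l + q))"
    unfolding lookup_mult lookup_single by (rule refl)
  also have "\<dots> = (\<Sum>l. (a * (\<Sum>q. Poly_Mapping.lookup x q when k = l + q)) when h = l)"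
    by (simp add: when_mult)
  also have "\<dots> = a * (\<Sum>q. Poly_Mapping.lookup x q when k = h + q)" by simp
  also have "(\<Sum>q. Poly_Mapping.lookup x q when k = h + q) = (\<Sum>q. Poly_Mapping.lookup x q when q = k - h)"
    by (rule Sum_any.cong) (auto simp: when_def algebra_simps)
  also have "\<dots> = Poly_Mapping.lookup x (k - h)" by simp
  finally show ?thesis .
qed

lemma lookup_mult_single:
  fixes x :: "'g::ab_group_add \<Rightarrow>\<^sub>0 'r::ring_1"
  shows "Poly_Mapping.lookup (x * Poly_Mapping.single h a) k = Poly_Mapping.lookup x (k - h) * a"
proof -
  have "Poly_Mapping.lookup (x * Poly_Mapping.single h a) k
      = (\<Sum>l. Poly_Mapping.lookup x l * (\<Sum>q. (a when h = q) when k = l + q))"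
    unfolding lookup_mult lookup_single by (rule refl)
  also have "\<dots> = (\<Sum>l. Poly_Mapping.lookup x l * (a when k = l + h))"
  proof (rule Sum_any.cong)
    fix l
    have "(\<Sum>q. (a when h = q) when k = l + q) = (\<Sum>q. (a when k = l + q) when h = q)"
      by (rule Sum_any.cong) (auto simp: when_def)
    then show "Poly_Mapping.lookup x l * (\<Sum>q. (a when h = q) when k = l + q) = Poly_Mapping.lookup x l * (a when k = l + h)"
      by simp
  qed
  also have "\<dots> = (\<Sum>l. (Poly_Mapping.lookup x l * a) when l = k - h)"
    by (rule Sum_any.cong) (auto simp: when_def algebra_simps)
  also have "\<dots> = Poly_Mapping.lookup x (k - h) * a" by simp
  finally show ?thesis .
qed

definition dl :: "'g::ab_group_add \<Rightarrow> 'g \<Rightarrow>\<^sub>0 'r::ring_1" where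
  "dl h = Poly_Mapping.single h 1"

lemma dl_central: "dl h * x = x * dl h"
  by (rule poly_mapping_eqI) (simp add: dl_def lookup_single_mult lookup_mult_single)


definition gm :: "nat \<Rightarrow> 'g::ab_group_add \<Rightarrow> 'g" where
  "gm n g = ((+) g ^^ n) 0"

lemma gm_0[simp]: "gm 0 g = 0" by (simp add: gm_def)
lemma gm_Suc[simp]: "gm (Suc n) g = g + gm n g" by (simp add: gm_def)
lemma gm_add: "gm (m + n) g = gm m g + gm n g"
  by (induct m) (simp_all add: add.assoc)
lemma gm_mult: "gm (m * n) g = gm m (gm n g)"
  by (induct m) (simp_all add: gm_add)
lemma gm_zero[simp]: "gm n 0 = 0" by (induct n) simp_all

lemma dl_mult: "dl a * dl b = (dl (a + b) :: 'g::ab_group_add \<Rightarrow>\<^sub>0 'r::ring_1)"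
  by (simp add: dl_def mult_single)
lemma dl_0: "dl 0 = 1" by (simp add: dl_def)
lemma dl_pow: "(dl g :: 'g::ab_group_add \<Rightarrow>\<^sub>0 'r::ring_1) ^ n = dl (gm n g)"
  by (induct n) (simp_all add: dl_0 dl_mult)

definition central :: "'a::ring_1 \<Rightarrow> bool" where
  "central c \<longleftrightarrow> (\<forall>y. c * y = y * c)"

lemma central_mult: "central a \<Longrightarrow> central b \<Longrightarrow> central (a * b)"
  unfolding central_def by (metis mult.assoc)
lemma central_add: "central a \<Longrightarrow> central b \<Longrightarrow> central (a + b)"
  unfolding central_def by (simp add: algebra_simps)
lemma central_diff: "central a \<Longrightarrow> central b \<Longrightarrow> central (a - b)"
  unfolding central_def by (simp add: algebra_simps)
lemma central_uminus: "central a \<Longrightarrow> central (- a)"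
  unfolding central_def by simp
lemma central_of_int: "central (of_int z)"
  unfolding central_def by (simp add: mult_of_int_commute)
lemma central_of_nat: "central (of_nat z)"
  unfolding central_def by (simp add: mult_of_nat_commute)
lemma central_numeral: "central (numeral w)"
  using central_of_nat[of "numeral w"] by simp
lemma central_one: "central 1"
  unfolding central_def by simp
lemma central_dl: "central (dl h)"
  unfolding central_def by (simp add: dl_central)

lemma nilp_of_dl_mult:
  fixes z :: "'g::ab_group_add \<Rightarrow>\<^sub>0 'r::ring_1"
  assumes "(dl g * z) ^ n = 0"
  shows "z ^ n = 0"
proof -
  have "z = dl (- g) * (dl g * z)" by (simp add: mult.assoc[symmetric] dl_mult dl_0)
  moreover have "(dl g * z) * dl (- g) = dl (- g) * (dl g * z)" by (simp add: dl_central)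
  ultimately show ?thesis using nilp_mult_comm(2)[OF _ assms] by metis
qed

definition aug :: "('g::ab_group_add \<Rightarrow>\<^sub>0 'r::ring_1) \<Rightarrow> 'r" where
  "aug x = Sum_any (Poly_Mapping.lookup x)"

lemma aug_add: "aug (x + y) = aug x + aug y"
proof -
  have fx: "finite {k. Poly_Mapping.lookup x k \<noteq> 0}" and fy: "finite {k. Poly_Mapping.lookup y k \<noteq> 0}"
    by (simp_all add: keys.rep_eq[symmetric] finite_keys)
  show ?thesis unfolding aug_def lookup_add by (rule Sum_any.distrib[OF fx fy])
qed

lemma aug_dl_mult:
  fixes y :: "'g::ab_group_add \<Rightarrow>\<^sub>0 'r::ring_1"
  shows "aug (dl h * y) = aug y"
proof -
  have b: "bij (\<lambda>k::'g. k - h)"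
    by (rule bijI[OF injI surjI[of _ "\<lambda>k. k + h"]]) auto
  have "aug (dl h * y) = (\<Sum>k. Poly_Mapping.lookup y (k - h))"
    unfolding aug_def dl_def by (simp add: lookup_single_mult)
  also have "\<dots> = aug y"
    unfolding aug_def by (rule Sum_any.reindex_cong[OF b, symmetric]) (simp add: comp_def)
  finally show ?thesis .
qed

lemma aug_one: "aug (1 :: 'g::ab_group_add \<Rightarrow>\<^sub>0 'r::ring_1) = 1"
proof -
  have "Poly_Mapping.lookup (1 :: 'g::ab_group_add \<Rightarrow>\<^sub>0 'r::ring_1) = (\<lambda>k. (1::'r) when 0 = k)"
    by (rule ext) (metis lookup_single single_one)
  then have "aug (1 :: 'g::ab_group_add \<Rightarrow>\<^sub>0 'r::ring_1) = Sum_any (\<lambda>k. (1::'r) when 0 = k)"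
    unfolding aug_def by simp
  then show ?thesis by simp
qed



lemma gw_central:
  fixes a :: "'a::ring_1"
  assumes gw: "GWNC TYPE('a)" and c: "central a" and nu: "\<not> ring_unit a"
  shows "\<exists>n. (a * (a - 1)) ^ n = 0 \<or> (a * (a + 1)) ^ n = 0"
proof -
  obtain q e where q: "ring_nilpotent q" and e: "ring_idempotent e" and d: "a = q + e \<or> a = q - e"
    using gw nu unfolding GWNC_def by blast
  obtain n where qn: "q ^ n = 0" using q unfolding ring_nilpotent_def by blast
  have "a * q = q * a" using c unfolding central_def by simp
  then show ?thesis using gwnc_key[OF _ qn _ d] e unfolding ring_idempotent_def by blast
qed

lemma nonunit_by_aug:
  fixes a :: "'g::ab_group_add \<Rightarrow>\<^sub>0 'r::ring_1"
  assumes n2: "\<not> ring_unit (2::'r)"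
    and h: "\<And>y. aug (a * y) = aug y + aug y \<and> aug (y * a) = aug y + aug y"
  shows "\<not> ring_unit a"
proof
  assume "ring_unit a"
  then obtain b where b: "a * b = 1" "b * a = 1" unfolding ring_unit_def by blast
  have "aug b + aug b = 1" using h[of b] b aug_one by metis
  then have "2 * aug b = 1" "aug b * 2 = 1" by (simp_all add: mult_2 mult_2_right)
  then show False using n2 unfolding ring_unit_def by blast
qed

lemma nonunit_two:
  assumes "\<not> ring_unit (2::'r::ring_1)"
  shows "\<not> ring_unit (2 :: 'g::ab_group_add \<Rightarrow>\<^sub>0 'r)"
  by (rule nonunit_by_aug[OF assms]) (simp add: mult_2 mult_2_right aug_add)

lemma nonunit_one_dl:
  assumes "\<not> ring_unit (2::'r::ring_1)"
  shows "\<not> ring_unit (1 + dl h :: 'g::ab_group_add \<Rightarrow>\<^sub>0 'r)"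
proof (rule nonunit_by_aug[OF assms])
  fix y :: "'g \<Rightarrow>\<^sub>0 'r"
  have "aug (y * dl h) = aug y" by (metis dl_central aug_dl_mult)
  then show "aug ((1 + dl h) * y) = aug y + aug y \<and> aug (y * (1 + dl h)) = aug y + aug y"
    by (simp add: distrib_left distrib_right aug_add aug_dl_mult)
qed

lemma single0_pow: "(Poly_Mapping.single 0 a :: 'g::monoid_add \<Rightarrow>\<^sub>0 'r::semiring_1) ^ n = Poly_Mapping.single 0 (a ^ n)"
  by (induct n) (simp_all add: mult_single)

lemma single_eq_0_iff: "Poly_Mapping.single k a = 0 \<longleftrightarrow> a = 0"
  by (metis inj_single injD single_zero)

lemma numeral_nilp_transfer:
  "((numeral w :: 'g::ab_group_add \<Rightarrow>\<^sub>0 'r::ring_1) ^ n = 0) \<longleftrightarrow> ((numeral w :: 'r) ^ n = 0)"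
proof -
  have "(numeral w :: 'g::ab_group_add \<Rightarrow>\<^sub>0 'r::ring_1) ^ n = Poly_Mapping.single 0 ((numeral w::'r) ^ n)"
    by (simp flip: single_numeral add: single0_pow)
  then show ?thesis by (simp add: single_eq_0_iff)
qed

lemma single0_mult_dl: "Poly_Mapping.single 0 e * dl h = (Poly_Mapping.single h e :: 'g::ab_group_add \<Rightarrow>\<^sub>0 'r::ring_1)"
  by (simp add: dl_def mult_single)

lemma dl_fix:
  fixes e :: "'r::ring_1"
  assumes "e \<noteq> 0" "Poly_Mapping.single 0 e * dl h = (Poly_Mapping.single 0 e :: 'g::ab_group_add \<Rightarrow>\<^sub>0 'r)"
  shows "h = 0"
proof (rule ccontr)
  assume "h \<noteq> 0"
  have "Poly_Mapping.lookup (Poly_Mapping.single h e :: 'g \<Rightarrow>\<^sub>0 'r) 0 = e"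
    using assms(2) by (simp add: single0_mult_dl)
  then show False using \<open>h \<noteq> 0\<close> assms(1) by (simp add: lookup_single_not_eq)
qed

lemma dl_negfix:
  fixes e :: "'r::ring_1"
  assumes "e \<noteq> 0" "- (Poly_Mapping.single 0 e * dl h) = (Poly_Mapping.single 0 e :: 'g::ab_group_add \<Rightarrow>\<^sub>0 'r)"
  shows "h = 0 \<and> e + e = 0"
proof -
  have l: "Poly_Mapping.lookup (- Poly_Mapping.single h e :: 'g \<Rightarrow>\<^sub>0 'r) 0 = e"
    using assms(2) by (simp add: single0_mult_dl)
  have "h = 0"
  proof (rule ccontr)
    assume "h \<noteq> 0"
    then show False using l assms(1) by (simp add: lookup_single_not_eq lookup_uminus)
  qed
  moreover have "- e = e" using l \<open>h = 0\<close> by (simp add: lookup_uminus)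
  moreover have "e + - e = 0" by simp
  ultimately show ?thesis by metis
qed

lemma part_lemma:
  fixes E :: "'g::ab_group_add \<Rightarrow>\<^sub>0 'r::ring_1"
  assumes EE: "E * E = E" and cE: "central E"
    and nil: "(E * dl g - E) ^ n = 0 \<or> (E * dl g + E) ^ n = 0"
    and pE: "of_nat (p ^ k) * E = 0" and p: "prime p"
  shows "\<exists>j>0. E * dl (gm (p ^ j) g) = E \<or> (odd (p ^ j) \<and> - (E * dl (gm (p ^ j) g)) = E)"
proof -
  define X where "X = E * dl g"
  have Xc: "E * dl g = dl g * E" using cE unfolding central_def by simp
  have Xpow: "X ^ m = E * dl (gm m g)" if "m > 0" for m
    unfolding X_def comm_power_mult[OF Xc] idem_power[OF EE that] dl_pow ..
  have EX: "E * X = X" unfolding X_def by (simp add: mult.assoc[symmetric] EE)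
  have XE: "X * E = X"
  proof -
    have "X * E = E * (dl g * E)" unfolding X_def by (simp only: mult.assoc)
    also have "\<dots> = (E * E) * dl g" by (simp only: Xc[symmetric] mult.assoc)
    finally show ?thesis using EE X_def by simp
  qed
  from nil show ?thesis
  proof
    assume h: "(E * dl g - E) ^ n = 0"
    have h1: "E * (X - E) = X - E" using EX EE by (simp add: right_diff_distrib)
    have h2: "(X - E) * E = X - E" using XE EE by (simp add: left_diff_distrib)
    have h3: "(X - E) ^ n = 0" using h X_def by simp
    obtain j where j0: "j > 0" "(E + (X - E)) ^ (p ^ j) = E"
      using unipotent_pow[OF p EE h1 h2 h3 pE] by blast
    have "E + (X - E) = X" by simp
    then have j: "j > 0" "X ^ (p ^ j) = E" using j0 by simp_all
    have pj: "p ^ j > 0" using p prime_gt_0_nat by simp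
    have eq: "X ^ (p ^ j) = E * dl (gm (p ^ j) g)" by (rule Xpow[OF pj])
    have "E * dl (gm (p ^ j) g) = E" using eq j(2) by (rule HOL.trans[OF HOL.sym])
    then show ?thesis using j(1) by blast
  next
    assume h: "(E * dl g + E) ^ n = 0"
    have hn: "(- X - E) ^ n = 0"
    proof -
      have "(- X - E) = - (E * dl g + E)" by (simp add: X_def)
      then have "(- X - E) ^ n = (- (E * dl g + E)) ^ n" by (simp only:)
      also have "\<dots> = (-1) ^ n * (E * dl g + E) ^ n" by (rule power_minus)
      finally show ?thesis by (simp only: h mult_zero_right)
    qed
    have h1: "E * (- X - E) = - X - E" using EX EE by (simp add: right_diff_distrib)
    have h2: "(- X - E) * E = - X - E" using XE EE by (simp add: left_diff_distrib)
    obtain j where j0: "j > 0" "(E + (- X - E)) ^ (p ^ j) = E"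
      using unipotent_pow[OF p EE h1 h2 hn pE] by blast
    have "E + (- X - E) = - X" by simp
    then have j: "j > 0" "(- X) ^ (p ^ j) = E" using j0 by simp_all
    have pj: "p ^ j > 0" using p prime_gt_0_nat by simp
    show ?thesis
    proof (cases "even (p ^ j)")
      case True
      then have "(- X) ^ (p ^ j) = X ^ (p ^ j)" by (rule power_minus_even)
      then have "X ^ (p ^ j) = E" using j by simp
      have eq: "X ^ (p ^ j) = E * dl (gm (p ^ j) g)" by (rule Xpow[OF pj])
      have "E * dl (gm (p ^ j) g) = E" using eq \<open>X ^ (p ^ j) = E\<close> by (rule HOL.trans[OF HOL.sym])
      then show ?thesis using j(1) by blast
    next
      case False
      then have "(- X) ^ (p ^ j) = - (X ^ (p ^ j))" by (rule power_minus_odd)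
      then have "- (X ^ (p ^ j)) = E" using j by simp
      have eq: "X ^ (p ^ j) = E * dl (gm (p ^ j) g)" by (rule Xpow[OF pj])
      have "- (E * dl (gm (p ^ j) g)) = - (X ^ (p ^ j))" by (simp only: eq)
      also have "\<dots> = E" by fact
      finally show ?thesis using j(1) False by blast
    qed
  qed
qed



lemma order_pow2:
  fixes h :: "'g::ab_group_add"
  assumes "gm (2 ^ j) h = 0"
  shows "\<exists>i. add_order h = 2 ^ i"
proof -
  have gmd: "((+) h ^^ n) 0 = gm n h" for n by (simp add: gm_def)
  have ex: "\<exists>n>0. gm n h = 0" using assms by (intro exI[of _ "2 ^ j"]) simp
  define ord0 where "ord0 = (LEAST n. n > 0 \<and> gm n h = 0)"
  have ao: "add_order h = ord0" unfolding add_order_def gmd ord0_def using ex by simp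
  have o1: "ord0 > 0 \<and> gm ord0 h = 0" unfolding ord0_def using LeastI_ex[OF ex] .
  have o2: "\<not> (m > 0 \<and> gm m h = 0)" if "m < ord0" for m
    using not_less_Least[of m "\<lambda>n. n > 0 \<and> gm n h = 0"] that unfolding ord0_def by blast
  have e1: "(2::nat) ^ j = (2 ^ j div ord0) * ord0 + 2 ^ j mod ord0" by simp
  have e2: "gm (2 ^ j) h = gm ((2 ^ j div ord0) * ord0) h + gm (2 ^ j mod ord0) h"
    by (subst e1) (rule gm_add)
  have e3: "gm ((2 ^ j div ord0) * ord0) h = 0" using o1 by (simp add: gm_mult)
  have "gm (2 ^ j mod ord0) h = 0" using assms e2 e3 by simp
  moreover have "2 ^ j mod ord0 < ord0" using o1 by simp
  ultimately have "2 ^ j mod ord0 = 0" using o2[of "2 ^ j mod ord0"] by simp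
  then have "ord0 dvd 2 ^ j" by (simp add: mod_eq_0_iff_dvd)
  then obtain i where "ord0 = 2 ^ i" using divides_primepow_nat[of 2 ord0 j] by auto
  then show ?thesis using ao by blast
qed

lemma FX_eqs:
  fixes F d :: "'a::ring_1"
  assumes FF: "F * F = F" and dF: "d * F = F * d"
  shows "(F * d) * (F * d - 1) = d * (F * d - F)" "(F * d) * (F * d + 1) = d * (F * d + F)"
proof -
  have sq: "(F * d) * (F * d) = d * (F * d)"
  proof -
    have "(F * d) * (F * d) = F * (d * F) * d" by (simp only: mult.assoc)
    also have "\<dots> = (F * F) * d * d" by (simp only: dF mult.assoc)
    also have "\<dots> = F * d * d" using FF by simp
    also have "\<dots> = d * F * d" by (simp only: dF)
    also have "\<dots> = d * (F * d)" by (simp only: mult.assoc)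
    finally show ?thesis .
  qed
  show "(F * d) * (F * d - 1) = d * (F * d - F)"
    by (simp add: right_diff_distrib sq dF)
  show "(F * d) * (F * d + 1) = d * (F * d + F)"
    by (simp add: distrib_left sq dF)
qed



lemma odd_three_pow: "\<exists>t::nat. (3::nat) ^ k = 2 * t + 1"
proof -
  have "odd ((3::nat) ^ k)" by simp
  then show ?thesis by (metis oddE)
qed

lemma idem_from_six:
  fixes F :: "'a::ring_1"
  assumes six: "(6::'a) ^ k = 0" and uv: "u * 2 ^ k + v * 3 ^ k = (1::int)"
    and F: "F = of_int (u * 2 ^ k)"
  shows "F * F = F" "1 - F = of_int (v * 3 ^ k)" "of_nat (3 ^ k) * F = 0"
    "of_nat (2 ^ k) * (1 - F) = 0"
proof -
  have s6: "(of_int (6 ^ k) :: 'a) = 0" using six by simp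
  show e1: "1 - F = of_int (v * 3 ^ k)"
  proof -
    have "v * 3 ^ k = 1 - u * 2 ^ k" using uv by simp
    then show ?thesis using F by simp
  qed
  have "F * (1 - F) = of_int (u * 2 ^ k * (v * 3 ^ k))" using F e1 by simp
  also have "u * 2 ^ k * (v * 3 ^ k) = (u * v) * 6 ^ k"
    by (simp add: power_mult_distrib[symmetric] mult.assoc mult.left_commute)
  finally have "F * (1 - F) = 0" using s6 by (simp only: of_int_mult mult_zero_right)
  then show "F * F = F" by (simp add: right_diff_distrib)
  have "of_nat (3 ^ k) * F = (of_int (3 ^ k * (u * 2 ^ k)) :: 'a)" using F by simp
  also have "(3::int) ^ k * (u * 2 ^ k) = u * 6 ^ k"
    by (simp add: power_mult_distrib[symmetric] mult.assoc mult.left_commute)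
  finally show "of_nat (3 ^ k) * F = 0" using s6 by (simp only: of_int_mult mult_zero_right)
  have "of_nat (2 ^ k) * (1 - F) = (of_int (2 ^ k * (v * 3 ^ k)) :: 'a)" using e1 by simp
  also have "(2::int) ^ k * (v * 3 ^ k) = v * 6 ^ k"
    by (simp add: power_mult_distrib[symmetric] mult.assoc mult.left_commute)
  finally show "of_nat (2 ^ k) * (1 - F) = 0" using s6 by (simp only: of_int_mult mult_zero_right)
qed



theorem theorem3p6:
  assumes "\<not> ring_unit (2::'r::ring_1)"
    and "\<exists>g::'g::ab_group_add. g \<noteq> 0"
    and "GWNC TYPE('g \<Rightarrow>\<^sub>0 'r)"
  shows "is_p_group 2 TYPE('g) \<and> ring_nilpotent (2::'r)"
proof -
  obtain g0 :: 'g where g0: "g0 \<noteq> 0" using assms(2) by blast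
  note gw = assms(3)
  have n2: "\<not> ring_unit (2::'r)" by (rule assms(1))
  have one_nz: "(1::'r) \<noteq> 0"
  proof
    assume "(1::'r) = 0"
    then have "(2::'r) * 0 = 1 \<and> 0 * (2::'r) = 1" by simp
    then show False using n2 unfolding ring_unit_def by blast
  qed
  have cent2: "central (2 :: 'g \<Rightarrow>\<^sub>0 'r)" by (rule central_numeral)
  obtain n where "((2 :: 'g \<Rightarrow>\<^sub>0 'r) * (2 - 1)) ^ n = 0 \<or> ((2 :: 'g \<Rightarrow>\<^sub>0 'r) * (2 + 1)) ^ n = 0"
    using gw_central[OF gw cent2 nonunit_two[OF n2]] by blast
  then have A2: "(2 :: 'g \<Rightarrow>\<^sub>0 'r) ^ n = 0 \<or> (6 :: 'g \<Rightarrow>\<^sub>0 'r) ^ n = 0" by simp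
  have two_nil: "\<exists>k. (2::'r) ^ k = 0"
  proof (rule ccontr)
    assume nt: "\<not> (\<exists>k. (2::'r) ^ k = 0)"
    have ntA: "(2 :: 'g \<Rightarrow>\<^sub>0 'r) ^ k \<noteq> 0" for k
      using nt numeral_nilp_transfer[of "Num.Bit0 Num.One" k, where 'g='g and 'r='r] by auto
    define k where "k = n"
    have six: "(6 :: 'g \<Rightarrow>\<^sub>0 'r) ^ k = 0" using A2 ntA k_def by auto
    have "gcd ((2::int) ^ k) (3 ^ k) = 1"
      by (simp add: coprime_power_left_iff coprime_power_right_iff flip: coprime_iff_gcd_eq_1)
    then obtain u v :: int where uv: "u * 2 ^ k + v * 3 ^ k = 1" using bezout_int[of "2 ^ k" "3 ^ k"] by auto
    define f :: 'r where "f = of_int (u * 2 ^ k)"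
    define F :: "'g \<Rightarrow>\<^sub>0 'r" where "F = of_int (u * 2 ^ k)"
    note Fp = idem_from_six[OF six uv F_def]
    have FFs: "F = Poly_Mapping.single 0 f" unfolding F_def f_def by (rule single_of_int[symmetric])
    have F1s: "1 - F = Poly_Mapping.single 0 (of_int (v * 3 ^ k))" by (simp only: Fp(2) single_of_int)
    have cF: "central F" unfolding F_def by (rule central_of_int)
    have cF1: "central (1 - F)" unfolding Fp(2) by (rule central_of_int)
    have fnz: "f \<noteq> 0"
    proof
      assume "f = 0"
      then have "F = 0" using FFs by simp
      then have "of_nat (2 ^ k) = (0 :: 'g \<Rightarrow>\<^sub>0 'r)" using Fp(4) by simp
      then show False using ntA[of k] by simp
    qed
    have vnz: "(of_int (v * 3 ^ k) :: 'r) \<noteq> 0"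
    proof
      assume "(of_int (v * 3 ^ k) :: 'r) = 0"
      then have "1 - F = 0" using F1s by simp
      then have "F = 1" by simp
      then have "(3 :: 'g \<Rightarrow>\<^sub>0 'r) ^ k = 0" using Fp(3) by simp
      then have t3: "(3 :: 'r) ^ k = 0" using numeral_nilp_transfer[of "Num.Bit1 Num.One" k, where 'g='g and 'r='r] by simp
      obtain t :: nat where t: "(3::nat) ^ k = 2 * t + 1" using odd_three_pow by blast
      have "(of_nat (3 ^ k) :: 'r) = 2 * of_nat t + 1" using t by simp
      then have "(0::'r) = 2 * of_nat t + 1" using t3 by simp
      then have "1 = - ((2::'r) * of_nat t)" by (metis add.commute eq_neg_iff_add_eq_0)
      then have "(2::'r) * (- of_nat t) = 1" by simp
      moreover have "(- of_nat t) * (2::'r) = 2 * (- of_nat t)"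
        by (simp add: mult_of_nat_commute)
      ultimately show False using n2 unfolding ring_unit_def by metis
    qed
    have j1: "\<exists>j. gm (3 ^ j) g0 = 0"
    proof -
      have p3: "prime (3::nat)" by simp
      have nuX: "\<not> ring_unit (F * dl g0)"
      proof
        assume "ring_unit (F * dl g0)"
        then obtain y where y: "F * dl g0 * y = 1" unfolding ring_unit_def by blast
        have "(1 - F) * F = 0" using Fp(1) by (simp add: left_diff_distrib)
        then have "(1 - F) * (F * dl g0 * y) = 0" by (simp add: mult.assoc[symmetric])
        then have "1 - F = 0" using y by simp
        then show False using F1s vnz by (simp add: single_eq_0_iff)
      qed
      have cX: "central (F * dl g0)" by (rule central_mult[OF cF central_dl])
      obtain n1 where "((F * dl g0) * (F * dl g0 - 1)) ^ n1 = 0 \<or> ((F * dl g0) * (F * dl g0 + 1)) ^ n1 = 0"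
        using gw_central[OF gw cX nuX] by blast
      moreover have dF: "dl g0 * F = F * dl g0" using cF unfolding central_def by simp
      ultimately have "(dl g0 * (F * dl g0 - F)) ^ n1 = 0 \<or> (dl g0 * (F * dl g0 + F)) ^ n1 = 0"
        using FX_eqs[OF Fp(1) dF] by simp
      then have nil: "(F * dl g0 - F) ^ n1 = 0 \<or> (F * dl g0 + F) ^ n1 = 0"
        using nilp_of_dl_mult by blast
      obtain j where "j > 0" and jj: "F * dl (gm (3 ^ j) g0) = F \<or> (odd ((3::nat) ^ j) \<and> - (F * dl (gm (3 ^ j) g0)) = F)"
        using part_lemma[OF Fp(1) cF nil Fp(3) p3] by blast
      from jj show ?thesis
      proof
        assume "F * dl (gm (3 ^ j) g0) = F"
        then show ?thesis using dl_fix[OF fnz] FFs by blast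
      next
        assume "odd ((3::nat) ^ j) \<and> - (F * dl (gm (3 ^ j) g0)) = F"
        then have "gm (3 ^ j) g0 = 0 \<and> f + f = 0" using dl_negfix[OF fnz] FFs by blast
        then have FF0: "F + F = 0" using FFs by (simp flip: single_add)
        obtain t :: nat where t: "(3::nat) ^ k = 2 * t + 1" using odd_three_pow by blast
        have "of_nat (3 ^ k) * F = of_nat t * (F + F) + F"
          by (simp add: t distrib_right distrib_left mult_2)
        then have "F = 0" using Fp(3) FF0 by simp
        then show ?thesis using fnz FFs by (simp add: single_eq_0_iff)
      qed
    qed
    have j2: "\<exists>j>0. gm (2 ^ j) g0 = 0"
    proof -
      define E where "E = 1 - F"
      have EE: "E * E = E" unfolding E_def using Fp(1) by (simp add: algebra_simps)
      have nuX: "\<not> ring_unit (E * dl g0)"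
      proof
        assume "ring_unit (E * dl g0)"
        then obtain y where y: "E * dl g0 * y = 1" unfolding ring_unit_def by blast
        have "F * E = 0" unfolding E_def using Fp(1) by (simp add: right_diff_distrib)
        then have "F * (E * dl g0 * y) = 0" by (simp add: mult.assoc[symmetric])
        then have "F = 0" using y by simp
        then show False using FFs fnz by (simp add: single_eq_0_iff)
      qed
      have cE: "central E" unfolding E_def by (rule cF1)
      have cX: "central (E * dl g0)" by (rule central_mult[OF cE central_dl])
      obtain n1 where "((E * dl g0) * (E * dl g0 - 1)) ^ n1 = 0 \<or> ((E * dl g0) * (E * dl g0 + 1)) ^ n1 = 0"
        using gw_central[OF gw cX nuX] by blast
      moreover have dE: "dl g0 * E = E * dl g0" using cE unfolding central_def by simp
      ultimately have "(dl g0 * (E * dl g0 - E)) ^ n1 = 0 \<or> (dl g0 * (E * dl g0 + E)) ^ n1 = 0"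
        using FX_eqs[OF EE dE] by simp
      then have nil: "(E * dl g0 - E) ^ n1 = 0 \<or> (E * dl g0 + E) ^ n1 = 0"
        using nilp_of_dl_mult by blast
      obtain j where j0: "j > 0" and jj: "E * dl (gm (2 ^ j) g0) = E \<or> (odd ((2::nat) ^ j) \<and> - (E * dl (gm (2 ^ j) g0)) = E)"
        using part_lemma[OF EE cE nil _ two_is_prime_nat, of k] Fp(4) E_def by blast
      then have "E * dl (gm (2 ^ j) g0) = E" by auto
      then have "gm (2 ^ j) g0 = 0" using dl_fix[OF vnz] F1s E_def by metis
      then show ?thesis using j0 by blast
    qed
    obtain a where a: "gm (3 ^ a) g0 = 0" using j1 by blast
    obtain b where b: "b > 0" "gm (2 ^ b) g0 = 0" using j2 by blast
    have "gcd ((2::nat) ^ b) (3 ^ a) = 1"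
      by (simp add: coprime_power_left_iff coprime_power_right_iff flip: coprime_iff_gcd_eq_1)
    then obtain x y :: nat where xy: "2 ^ b * x = 3 ^ a * y + 1"
      using bezout_nat[of "2 ^ b" "3 ^ a"] by auto
    have "gm (2 ^ b * x) g0 = 0" using b(2) by (simp add: mult.commute[of "2 ^ b"] gm_mult)
    moreover have "gm (3 ^ a * y + 1) g0 = g0" using a by (simp add: gm_add mult.commute[of "3 ^ a"] gm_mult)
    ultimately show False using xy g0 by simp
  qed
  obtain k where k: "(2::'r) ^ k = 0" using two_nil by blast
  have kA: "(2 :: 'g \<Rightarrow>\<^sub>0 'r) ^ k = 0" using k numeral_nilp_transfer[of "Num.Bit0 Num.One" k, where 'g='g and 'r='r] by simp
  have ord: "\<exists>i. add_order h = 2 ^ i" for h :: 'g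
  proof (cases "h = 0")
    case True
    then show ?thesis using order_pow2[of 0 h] by simp
  next
    case False
    define d :: "'g \<Rightarrow>\<^sub>0 'r" where "d = dl h"
    have cd: "central d" unfolding d_def by (rule central_dl)
    have ca: "central (1 + d)" by (rule central_add[OF central_one cd])
    have nu: "\<not> ring_unit (1 + d)" unfolding d_def by (rule nonunit_one_dl[OF n2])
    obtain m where "((1 + d) * (1 + d - 1)) ^ m = 0 \<or> ((1 + d) * (1 + d + 1)) ^ m = 0"
      using gw_central[OF gw ca nu] by blast
    then have "\<exists>N. (d * (d + 1)) ^ N = 0"
    proof
      assume "((1 + d) * (1 + d - 1)) ^ m = 0"
      moreover have "(1 + d) * (1 + d - 1) = d * (d + 1)" by (simp add: algebra_simps)
      ultimately show ?thesis by auto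
    next
      assume h: "((1 + d) * (1 + d + 1)) ^ m = 0"
      define x where "x = (1 + d) * (1 + d + 1)"
      define y where "y = (- 2) * (1 + d)"
      have cx: "central x" unfolding x_def
        by (intro central_mult central_add central_one cd central_numeral)
      have xy: "x * y = y * x" using cx unfolding central_def by simp
      have ym: "y ^ k = 0"
      proof -
        have "central (- 2 :: 'g \<Rightarrow>\<^sub>0 'r)" by (intro central_uminus central_numeral)
        then have "(- 2 :: 'g \<Rightarrow>\<^sub>0 'r) * (1 + d) = (1 + d) * (- 2)"
          unfolding central_def by blast
        moreover have "(- 2 :: 'g \<Rightarrow>\<^sub>0 'r) ^ k = (-1) ^ k * 2 ^ k" by (rule power_minus)
        then have "(- 2 :: 'g \<Rightarrow>\<^sub>0 'r) ^ k = 0" using kA by simp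
        ultimately show ?thesis unfolding y_def using nilp_mult_comm(1) by blast
      qed
      have "(x + y) ^ (m + k) = 0" using nilp_add[OF xy _ ym] h x_def by simp
      moreover have "x + y = d * (d + 1)" unfolding x_def y_def
        by (simp add: algebra_simps mult_2 mult_2_right)
      ultimately show ?thesis by auto
    qed
    then obtain N where "(d * (d + 1)) ^ N = 0" by blast
    then have "(d + 1) ^ N = 0" unfolding d_def by (rule nilp_of_dl_mult)
    then have nil: "(1 * dl h - 1) ^ N = (0 :: 'g \<Rightarrow>\<^sub>0 'r) \<or> (1 * dl h + 1) ^ N = (0 :: 'g \<Rightarrow>\<^sub>0 'r)" unfolding d_def by simp
    have p2: "of_nat (2 ^ k) * (1 :: 'g \<Rightarrow>\<^sub>0 'r) = 0" using kA by simp
    obtain j where j0: "j > 0" and jj: "1 * dl (gm (2 ^ j) h) = (1 :: 'g \<Rightarrow>\<^sub>0 'r) \<or> (odd ((2::nat) ^ j) \<and> - (1 * dl (gm (2 ^ j) h)) = (1 :: 'g \<Rightarrow>\<^sub>0 'r))"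
      using part_lemma[OF _ central_one nil p2] by auto
    then have "Poly_Mapping.single 0 1 * dl (gm (2 ^ j) h) = (Poly_Mapping.single 0 1 :: 'g \<Rightarrow>\<^sub>0 'r)"
      by auto
    then have "gm (2 ^ j) h = 0" using dl_fix[OF one_nz] by blast
    then show ?thesis by (rule order_pow2)
  qed
  show ?thesis unfolding is_p_group_def ring_nilpotent_def using ord k by blast
qed


end
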